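(* Let $s\ge 1$, $1\le M<N$ be integers and let $\tilde\phi:(0,\infty)\to\mathbb{R}$ be of class $C^4$, such that for some $r^*>0$ one has $\tilde\phi''(r)\ge 0$ for $r\in(0,r^*]$ and $\tilde\phi''(r)<0$ for $r>r^*$, and such that $\tilde\phi$ and its derivatives decay at infinity. Let $(y_\ell)_{\ell\in\mathbb{Z}}$ be an increasing chain with $y_{\ell+1+2N}-y_{\ell+2N}=y_{\ell+1}-y_\ell$ for all $\ell$, with atomistic energy $$\mathcal{E}^a(\mathbf{y})=\sum_{k=1}^{s}\sum_{\ell=-N+1}^{N}\tilde\phi(y_{\ell+k-1}-y_{\ell-1}).$$ Let $-N=\ell_{-M}<\ell_{-M+1}<\dots<\ell_M=N$ be integers, extended by $\ell_{j+2M}=\ell_j+2N$, set $Y_j=y_{\ell_j}$, $\tilde\nu_j=\ell_j-\ell_{j-1}$ and $\tilde r_j=(Y_j-Y_{j-1})/\tilde\nu_j$, and assume $\tilde\nu_j\ge s$ for all $j$ and that $\mathbf y$ is the piecewise linear interpolation of the $Y_j$, i.e. $y_{\ell_{j-1}+i}=Y_{j-1}+i\tilde r_j$ for $0\le i\le \tilde\nu_j$; write $\mathcal{E}^a(\mathbf{Y})$ for $\mathcal{E}^a(\mathbf y)$. Fix $\epsilon>0$ and define $\phi(r)=\epsilon^{-1}\tilde\phi(\epsilon r)$, $\phi_{cb}(r)=\sum_{k=1}^s\phi(kr)$, $X_j=\epsilon\ell_j$, $H_j=(X_j-X_{j-2})/2$, $\nu_j=\epsilon\tilde\nu_j$, $Y'_j=(Y_j-Y_{j-1})/(X_j-X_{j-1})$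 $(=\tilde r_j/\epsilon)$, $Y''_j=(Y'_j-Y'_{j-1})/H_j$, and the local QC energy $\mathcal{E}^{qc}(\mathbf{Y})=\sum_{j=-M+1}^{M}\nu_j\phi_{cb}(Y'_j)$. Then there exist scalars $\eta_{jk}\in[0,1]$ ($j=-M+1,\dots,M$, $k=2,\dots,s$) such that $$\mathcal{E}^a(\mathbf{Y})=\mathcal{E}^{qc}(\mathbf{Y})+\sum_{j=-M+1}^{M}H_{j+1}C_j\left\{\epsilon H_{j+1}(Y''_{j+1})^2\right\},\qquad C_j:=\sum_{k=2}^{s}\frac{-k^3+k}{12}\,\phi''\Big(k\big(\eta_{jk}Y'_j+(1-\eta_{jk})Y'_{j+1}\big)\Big).$$ (In this sense $\mathcal{E}^{qc}$ is formally a second order approximation of $\mathcal{E}^a$.)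
   Context: All indexed quantities $Y_j,\tilde r_j, X_j, H_j, Y'_j, Y''_j$ are extended to all $j\in\mathbb{Z}$ via the periodic extension of the indices $\ell_j$ and the periodicity of the chain (so e.g. $Y'_{M+1}=Y'_{-M+1}$). *)

theory Defs
  imports "HOL-Analysis.Analysis"
begin

definition C4_on :: "real set \<Rightarrow> (real \<Rightarrow> real) \<Rightarrow> bool" where
  "C4_on S f \<longleftrightarrow> (\<forall>k<4. \<forall>x\<in>S. (deriv ^^ k) f differentiable (at x))
                   \<and> continuous_on S ((deriv ^^ 4) f)"

definition E_at :: "(real \<Rightarrow> real) \<Rightarrow> nat \<Rightarrow> int \<Rightarrow> (int \<Rightarrow> real) \<Rightarrow> real" where
  "E_at phit s N y = (\<Sum>k=1..s. \<Sum>l=-N+1..N. phit (y (l + int k - 1) - y (l - 1)))"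

definition phi_eps :: "(real \<Rightarrow> real) \<Rightarrow> real \<Rightarrow> real \<Rightarrow> real" where
  "phi_eps phit \<epsilon> r = phit (\<epsilon> * r) / \<epsilon>"

definition phi_cb :: "(real \<Rightarrow> real) \<Rightarrow> nat \<Rightarrow> real \<Rightarrow> real" where
  "phi_cb phi s r = (\<Sum>k=1..s. phi (real k * r))"

definition Ynode :: "(int \<Rightarrow> real) \<Rightarrow> (int \<Rightarrow> int) \<Rightarrow> int \<Rightarrow> real" where
  "Ynode y l j = y (l j)"

definition Xnode :: "real \<Rightarrow> (int \<Rightarrow> int) \<Rightarrow> int \<Rightarrow> real" where
  "Xnode \<epsilon> l j = \<epsilon> * real_of_int (l j)"

definition Hnode :: "real \<Rightarrow> (int \<Rightarrow> int) \<Rightarrow> int \<Rightarrow> real" where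
  "Hnode \<epsilon> l j = (Xnode \<epsilon> l j - Xnode \<epsilon> l (j - 2)) / 2"

definition nunode :: "real \<Rightarrow> (int \<Rightarrow> int) \<Rightarrow> int \<Rightarrow> real" where
  "nunode \<epsilon> l j = \<epsilon> * real_of_int (l j - l (j - 1))"

definition Y1 :: "real \<Rightarrow> (int \<Rightarrow> real) \<Rightarrow> (int \<Rightarrow> int) \<Rightarrow> int \<Rightarrow> real" where
  "Y1 \<epsilon> y l j = (Ynode y l j - Ynode y l (j - 1)) / (Xnode \<epsilon> l j - Xnode \<epsilon> l (j - 1))"

definition Y2 :: "real \<Rightarrow> (int \<Rightarrow> real) \<Rightarrow> (int \<Rightarrow> int) \<Rightarrow> int \<Rightarrow> real" where
  "Y2 \<epsilon> y l j = (Y1 \<epsilon> y l j - Y1 \<epsilon> y l (j - 1)) / Hnode \<epsilon> l j"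

definition E_qc :: "(real \<Rightarrow> real) \<Rightarrow> nat \<Rightarrow> int \<Rightarrow> real \<Rightarrow> (int \<Rightarrow> real) \<Rightarrow> (int \<Rightarrow> int) \<Rightarrow> real" where
  "E_qc phit s M \<epsilon> y l =
     (\<Sum>j=-M+1..M. nunode \<epsilon> l j * phi_cb (phi_eps phit \<epsilon>) s (Y1 \<epsilon> y l j))"

end

theory Submission
  imports Defs
begin


lemma taylor2:
  fixes f :: "real \<Rightarrow> real"
  assumes d: "\<And>x. x > 0 \<Longrightarrow> f differentiable at x \<and> deriv f differentiable at x"
    and c: "c > 0" and x: "x > 0"
  shows "\<exists>t. min c x \<le> t \<and> t \<le> max c x \<and>
           f x = f c + deriv f c * (x - c) + deriv (deriv f) t / 2 * (x - c)^2"
proof (cases "x = c")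
  case True
  then show ?thesis by (intro exI[of _ c]) auto
next
  case False
  have D: "\<forall>m t. m < 2 \<and> min c x \<le> t \<and> t \<le> max c x \<longrightarrow>
      DERIV ((\<lambda>m. (deriv ^^ m) f) m) t :> (\<lambda>m. (deriv ^^ m) f) (Suc m) t"
  proof (intro allI impI)
    fix m :: nat and t assume a: "m < 2 \<and> min c x \<le> t \<and> t \<le> max c x"
    then have t: "t > 0" using c x by linarith
    from a have "m = 0 \<or> m = 1" by auto
    then show "DERIV ((\<lambda>m. (deriv ^^ m) f) m) t :> (\<lambda>m. (deriv ^^ m) f) (Suc m) t"
      using d[OF t] by (auto simp: DERIV_deriv_iff_real_differentiable)
  qed
  obtain t where t: "(if x < c then x < t \<and> t < c else c < t \<and> t < x)"
    and eq: "f x = (\<Sum>m<2. ((deriv ^^ m) f c / fact m) * (x - c)^m) + ((deriv ^^ 2) f t / fact 2) * (x - c)^2"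
    using Taylor[of 2 "\<lambda>m. (deriv ^^ m) f" f "min c x" "max c x" c x, OF _ _ D] False by auto
  have "f x = f c + deriv f c * (x - c) + deriv (deriv f) t / 2 * (x - c)^2"
    using eq by (simp add: numeral_2_eq_2)
  moreover have "min c x \<le> t \<and> t \<le> max c x" using t by (auto split: if_splits)
  ultimately show ?thesis by blast
qed

lemma sbp_gen:
  fixes F :: "nat \<Rightarrow> real" and K :: real
  shows "(\<Sum>i\<in>{1..<Suc n}. real i * (K - real i) * (F (i+1) - 2 * F i + F (i - 1)))
     = real n * (K - real n) * (F (Suc n) - F n) - (K + 1 - 2 * real n) * F n + (K + 1) * F 0
       - 2 * (\<Sum>i<n. F i)"
proof (induction n)
  case 0
  then show ?case by simp
next
  case (Suc n)
  have "{1..<Suc (Suc n)} = insert (Suc n) {1..<Suc n}" by auto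
  then show ?case using Suc by (simp add: algebra_simps)
qed

lemma sbp:
  fixes F :: "nat \<Rightarrow> real" and k :: nat
  assumes "k \<ge> 1"
  shows "(\<Sum>i\<in>{1..<k}. real i * (real k - real i) * (F (i+1) - 2 * F i + F (i - 1)))
     = (real k - 1) * (F 0 + F k) - 2 * (\<Sum>i\<in>{1..<k}. F i)"
proof -
  obtain n where n: "k = Suc n" using assms by (cases k) auto
  have s1: "(\<Sum>i\<in>{1..<k}. F i) = (\<Sum>i<k. F i) - F 0"
  proof -
    have "{..<k} = insert 0 {1..<k}" using assms by auto
    then show ?thesis by simp
  qed
  show ?thesis unfolding s1 using sbp_gen[of "real k" F n] by (simp add: n algebra_simps)
qed

lemma wsum_gen:
  fixes K :: real
  shows "(\<Sum>i\<in>{1..<n}. real i * (K - real i)) = K * real n * (real n - 1) / 2 - (real n - 1) * real n * (2 * real n - 1) / 6"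
proof (induction n)
  case 0 then show ?case by simp
next
  case (Suc n)
  show ?case
  proof (cases "n = 0")
    case True then show ?thesis by simp
  next
    case False
    have "{1..<Suc n} = insert n {1..<n}" using False by auto
    then show ?thesis using Suc by (simp add: field_simps)
  qed
qed



lemma node:
  fixes f :: "real \<Rightarrow> real" and k :: nat and p q :: real
  assumes d: "\<And>x. x > 0 \<Longrightarrow> f differentiable at x \<and> deriv f differentiable at x"
    and cont: "continuous_on {0<..} (deriv (deriv f))"
    and p: "p > 0" and q: "q > 0" and k: "k \<ge> 1"
  shows "\<exists>\<eta>. 0 \<le> \<eta> \<and> \<eta> \<le> 1 \<and>
    (\<Sum>i\<in>{1..<k}. f (real i * p + (real k - real i) * q))
    = (real k - 1) / 2 * (f (real k * p) + f (real k * q))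
      + (- (real k ^ 3) + real k) / 12 * deriv (deriv f) (real k * (\<eta> * p + (1 - \<eta>) * q)) * (p - q)^2"
proof (cases "k = 1")
  case True
  then show ?thesis by (intro exI[of _ 0]) simp
next
  case False
  then have k2: "k \<ge> 2" using k by auto
  define dd where "dd = p - q"
  define F where "F i = f (real k * q + real i * dd)" for i :: nat
  define lo where "lo = real k * min p q"
  define hi where "hi = real k * max p q"
  have lo: "lo > 0" using p q k by (simp add: lo_def)
  have Fi: "f (real i * p + (real k - real i) * q) = F i" for i
    unfolding F_def dd_def by (simp add: algebra_simps)
  have F0: "F 0 = f (real k * q)" and Fk: "F k = f (real k * p)"
    unfolding F_def dd_def by (simp_all add: algebra_simps)
  have inI: "real k * q + x * dd \<in> {lo..hi}" if "0 \<le> x" "x \<le> real k" for x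
  proof -
    define t where "t = x / real k"
    have t: "0 \<le> t" "t \<le> 1" using that k by (auto simp: t_def)
    have mm: "min p q \<le> q + t * (p - q) \<and> q + t * (p - q) \<le> max p q"
    proof (cases "p \<le> q")
      case True
      have "t * (q - p) \<le> q - p" using t True by (intro mult_left_le_one_le) auto
      moreover have "0 \<le> t * (q - p)" using t True by auto
      ultimately show ?thesis using True by (auto simp: algebra_simps)
    next
      case False
      have "t * (p - q) \<le> p - q" using t False by (intro mult_left_le_one_le) auto
      moreover have "0 \<le> t * (p - q)" using t False by auto
      ultimately show ?thesis using False by (auto simp: algebra_simps)
    qed
    then have "real k * min p q \<le> real k * (q + t * (p - q)) \<and> real k * (q + t * (p - q)) \<le> real k * max p q"
      by (simp add: mult_left_mono)
    moreover have "real k * (q + t * (p - q)) = real k * q + x * dd" using k by (simp add: field_simps t_def dd_def)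
    ultimately show ?thesis by (simp add: lo_def hi_def)
  qed
  have S: "convex (deriv (deriv f) ` {lo..hi})"
  proof -
    have "continuous_on {lo..hi} (deriv (deriv f))"
      using lo by (intro continuous_on_subset[OF cont]) auto
    then have "connected (deriv (deriv f) ` {lo..hi})"
      by (intro connected_continuous_image) auto
    then show ?thesis using is_interval_connected_1 is_interval_convex_1 by blast
  qed
  have sd: "\<exists>v \<in> deriv (deriv f) ` {lo..hi}. F (i+1) - 2 * F i + F (i - 1) = dd^2 * v"
    if i: "i \<in> {1..<k}" for i
  proof -
    define c where "c = real k * q + real i * dd"
    have cI: "c \<in> {lo..hi}" unfolding c_def using i by (intro inI) auto
    have pI: "c + dd \<in> {lo..hi}" unfolding c_def using inI[of "real i + 1"] i by (auto simp: algebra_simps)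
    have mI: "c - dd \<in> {lo..hi}" unfolding c_def using inI[of "real i - 1"] i by (auto simp: algebra_simps)
    have Fp: "F (i+1) = f (c + dd)" unfolding F_def c_def by (simp add: algebra_simps)
    have Fm: "F (i-1) = f (c - dd)" unfolding F_def c_def using i by (simp add: algebra_simps of_nat_diff)
    have Fc: "F i = f c" unfolding F_def c_def by simp
    obtain t1 where t1: "min c (c + dd) \<le> t1" "t1 \<le> max c (c + dd)"
      and e1: "f (c + dd) = f c + deriv f c * (c + dd - c) + deriv (deriv f) t1 / 2 * (c + dd - c)^2"
      using taylor2[OF d, of c "c + dd"] cI pI lo by auto
    obtain t2 where t2: "min c (c - dd) \<le> t2" "t2 \<le> max c (c - dd)"
      and e2: "f (c - dd) = f c + deriv f c * (c - dd - c) + deriv (deriv f) t2 / 2 * (c - dd - c)^2"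
      using taylor2[OF d, of c "c - dd"] cI mI lo by auto
    have t1I: "t1 \<in> {lo..hi}" using t1 cI pI by auto
    have t2I: "t2 \<in> {lo..hi}" using t2 cI mI by auto
    have vin: "(1/2) *\<^sub>R deriv (deriv f) t1 + (1/2) *\<^sub>R deriv (deriv f) t2 \<in> deriv (deriv f) ` {lo..hi}"
      using S t1I t2I unfolding convex_def
      by (elim ballE allE[of _ "1/2"] impE) auto
    have "F (i+1) - 2 * F i + F (i - 1) = dd^2 * ((1/2) *\<^sub>R deriv (deriv f) t1 + (1/2) *\<^sub>R deriv (deriv f) t2)"
      unfolding Fp Fm Fc using e1 e2 by (simp add: algebra_simps power2_eq_square)
    then show ?thesis using vin by blast
  qed
  then obtain V where V: "\<And>i. i \<in> {1..<k} \<Longrightarrow> V i \<in> deriv (deriv f) ` {lo..hi} \<and> F (i+1) - 2 * F i + F (i - 1) = dd^2 * V i"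
    by metis
  define w where "w i = real i * (real k - real i)" for i :: nat
  define W where "W = (\<Sum>i\<in>{1..<k}. w i)"
  have W: "W = real k * (real k ^ 2 - 1) / 6"
    unfolding W_def w_def wsum_gen by (simp add: field_simps power2_eq_square power3_eq_cube)
  have Wpos: "W > 0"
  proof -
    have "real k ^ 2 \<ge> 2 ^ 2" using k2 by (intro power_mono) auto
    then show ?thesis unfolding W using k2 by auto
  qed
  have "(\<Sum>i\<in>{1..<k}. (w i / W) *\<^sub>R V i) \<in> deriv (deriv f) ` {lo..hi}"
  proof (rule convex_sum[OF _ S])
    show "(\<Sum>i\<in>{1..<k}. w i / W) = 1" using Wpos by (simp add: W_def sum_divide_distrib[symmetric])
    show "\<And>i. i \<in> {1..<k} \<Longrightarrow> 0 \<le> w i / W" using Wpos by (auto simp: w_def)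
    show "\<And>i. i \<in> {1..<k} \<Longrightarrow> V i \<in> deriv (deriv f) ` {lo..hi}" using V by blast
  qed simp
  then obtain \<xi> where xi: "\<xi> \<in> {lo..hi}" and xieq: "(\<Sum>i\<in>{1..<k}. (w i / W) *\<^sub>R V i) = deriv (deriv f) \<xi>"
    by auto
  have sumwV: "(\<Sum>i\<in>{1..<k}. w i * V i) = W * deriv (deriv f) \<xi>"
  proof -
    have "(\<Sum>i\<in>{1..<k}. w i * V i) = W * (\<Sum>i\<in>{1..<k}. (w i / W) *\<^sub>R V i)"
      using Wpos by (simp add: sum_distrib_left)
    then show ?thesis using xieq by simp
  qed
  have main: "(\<Sum>i\<in>{1..<k}. F i) = (real k - 1) / 2 * (F 0 + F k) - dd^2 * W / 2 * deriv (deriv f) \<xi>"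
  proof -
    have "(\<Sum>i\<in>{1..<k}. w i * (F (i+1) - 2 * F i + F (i - 1))) = (\<Sum>i\<in>{1..<k}. dd^2 * (w i * V i))"
      using V by (intro sum.cong) auto
    also have "\<dots> = dd^2 * (W * deriv (deriv f) \<xi>)" unfolding sum_distrib_left[symmetric] sumwV ..
    finally have "(real k - 1) * (F 0 + F k) - 2 * (\<Sum>i\<in>{1..<k}. F i) = dd^2 * (W * deriv (deriv f) \<xi>)"
      using sbp[OF k, of F] unfolding w_def by simp
    then show ?thesis by (simp add: field_simps)
  qed
  obtain \<eta> where eta: "0 \<le> \<eta>" "\<eta> \<le> 1" and etaeq: "dd \<noteq> 0 \<Longrightarrow> real k * (\<eta> * p + (1 - \<eta>) * q) = \<xi>"
  proof (cases "dd = 0")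
    case True then show ?thesis using that[of 0] by simp
  next
    case False
    define e where "e = (\<xi> / real k - q) / dd"
    have xk: "min p q \<le> \<xi> / real k" "\<xi> / real k \<le> max p q"
      using xi k unfolding lo_def hi_def by (auto simp: field_simps)
    have "0 \<le> e \<and> e \<le> 1"
    proof (cases "dd > 0")
      case True
      then have "p > q" unfolding dd_def by simp
      then show ?thesis using xk True unfolding e_def dd_def by (auto simp: field_simps)
    next
      case False
      then have "dd < 0" using \<open>dd \<noteq> 0\<close> by simp
      then have "p < q" unfolding dd_def by simp
      then show ?thesis using xk \<open>dd < 0\<close> unfolding e_def dd_def by (auto simp: field_simps)
    qed
    moreover have "real k * (e * p + (1 - e) * q) = \<xi>"
    proof -
      have "e * p + (1 - e) * q = q + e * dd" unfolding dd_def by (simp add: algebra_simps)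
      also have "e * dd = \<xi> / real k - q" unfolding e_def using False by simp
      finally show ?thesis using k by simp
    qed
    ultimately show ?thesis using that[of e] by blast
  qed
  have "(\<Sum>i\<in>{1..<k}. f (real i * p + (real k - real i) * q))
    = (real k - 1) / 2 * (f (real k * p) + f (real k * q))
      + (- (real k ^ 3) + real k) / 12 * deriv (deriv f) (real k * (\<eta> * p + (1 - \<eta>) * q)) * (p - q)^2"
  proof (cases "dd = 0")
    case True
    then show ?thesis unfolding Fi main F0 Fk by (simp add: dd_def)
  next
    case False
    show ?thesis unfolding Fi main F0 Fk etaeq[OF False] W dd_def[symmetric]
      by (simp add: field_simps power3_eq_cube power2_eq_square)
  qed
  then show ?thesis using eta by blast
qed



lemma l_mono_gen:
  fixes l :: "int \<Rightarrow> int"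
  assumes "\<And>j. l (j-1) \<le> l j"
  shows "l A \<le> l (A + int m)"
proof (induction m)
  case 0 then show ?case by simp
next
  case (Suc m)
  have "l (A + int m) \<le> l (A + int (Suc m))" using assms[of "A + int (Suc m)"] by simp
  then show ?case using Suc by linarith
qed

lemma part_sum:
  fixes l :: "int \<Rightarrow> int" and g :: "int \<Rightarrow> real"
  assumes mono: "\<And>j. l (j-1) \<le> l j"
  shows "(\<Sum>a\<in>{l A..<l (A + int m)}. g a) = (\<Sum>j\<in>{A+1..A+int m}. \<Sum>a\<in>{l(j-1)..<l j}. g a)"
proof (induction m)
  case 0 then show ?case by simp
next
  case (Suc m)
  have m1: "l A \<le> l (A + int m)" using l_mono_gen[of l A m] mono by blast
  have m2: "l (A + int m) \<le> l (A + int (Suc m))" using mono[of "A + int (Suc m)"] by simp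
  have U: "{l A..<l (A + int (Suc m))} = {l A..<l (A + int m)} \<union> {l (A + int m)..<l (A + int (Suc m))}"
    using m1 m2 by auto
  have I: "{A+1..A+int (Suc m)} = insert (A + int (Suc m)) {A+1..A+int m}" by auto
  have "(\<Sum>a\<in>{l A..<l (A + int (Suc m))}. g a) = (\<Sum>a\<in>{l A..<l (A + int m)}. g a) + (\<Sum>a\<in>{l (A + int m)..<l (A + int (Suc m))}. g a)"
    unfolding U by (rule sum.union_disjoint) auto
  also have "\<dots> = (\<Sum>j\<in>{A+1..A+int m}. \<Sum>a\<in>{l(j-1)..<l j}. g a) + (\<Sum>a\<in>{l (A + int (Suc m) - 1)..<l (A + int (Suc m))}. g a)"
    using Suc by simp
  also have "\<dots> = (\<Sum>j\<in>{A+1..A+int (Suc m)}. \<Sum>a\<in>{l(j-1)..<l j}. g a)"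
    unfolding I by (subst sum.insert) auto
  finally show ?case .
qed

lemma elem_sum:
  fixes h :: "int \<Rightarrow> real" and \<nu> k :: nat and A :: real and B :: "nat \<Rightarrow> real"
  assumes k: "1 \<le> k" "k \<le> \<nu>"
    and h: "\<And>t. t < \<nu> \<Longrightarrow> h (L + int t) = (if t + k \<le> \<nu> then A else B (\<nu> - t))"
  shows "(\<Sum>a\<in>{L..<L + int \<nu>}. h a) = real (\<nu> - k + 1) * A + (\<Sum>i\<in>{1..<k}. B i)"
proof -
  have "(\<Sum>a\<in>{L..<L + int \<nu>}. h a) = (\<Sum>t\<in>{..<\<nu>}. h (L + int t))"
    by (rule sum.reindex_bij_witness[of _ "\<lambda>t. L + int t" "\<lambda>a. nat (a - L)"]) auto
  also have "\<dots> = (\<Sum>t\<in>{..<\<nu>}. (if t + k \<le> \<nu> then A else B (\<nu> - t)))"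
    using h by (intro sum.cong) auto
  also have "{..<\<nu>} = {..<\<nu> - k + 1} \<union> {\<nu> - k + 1..<\<nu>}" using k by auto
  also have "(\<Sum>t\<in>{..<\<nu> - k + 1} \<union> {\<nu> - k + 1..<\<nu>}. (if t + k \<le> \<nu> then A else B (\<nu> - t)))
      = (\<Sum>t\<in>{..<\<nu> - k + 1}. (if t + k \<le> \<nu> then A else B (\<nu> - t)))
        + (\<Sum>t\<in>{\<nu> - k + 1..<\<nu>}. (if t + k \<le> \<nu> then A else B (\<nu> - t)))"
    by (rule sum.union_disjoint) auto
  also have "(\<Sum>t\<in>{..<\<nu> - k + 1}. (if t + k \<le> \<nu> then A else B (\<nu> - t))) = (\<Sum>t\<in>{..<\<nu> - k + 1}. A)"
    using k by (intro sum.cong) auto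
  also have "(\<Sum>t\<in>{\<nu> - k + 1..<\<nu>}. (if t + k \<le> \<nu> then A else B (\<nu> - t))) = (\<Sum>t\<in>{\<nu> - k + 1..<\<nu>}. B (\<nu> - t))"
    using k by (intro sum.cong) auto
  also have "(\<Sum>t\<in>{\<nu> - k + 1..<\<nu>}. B (\<nu> - t)) = (\<Sum>i\<in>{1..<k}. B i)"
    using k by (intro sum.reindex_bij_witness[of _ "\<lambda>i. \<nu> - i" "\<lambda>t. \<nu> - t"]) auto
  finally show ?thesis by simp
qed

lemma deriv2_phi_eps:
  fixes phit :: "real \<Rightarrow> real"
  assumes d: "\<And>x. x > 0 \<Longrightarrow> phit differentiable at x \<and> deriv phit differentiable at x"
    and eps: "\<epsilon> > 0" and x: "x > 0"
  shows "deriv (deriv (phi_eps phit \<epsilon>)) x = \<epsilon> * deriv (deriv phit) (\<epsilon> * x)"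
proof -
  have D1: "deriv (phi_eps phit \<epsilon>) z = deriv phit (\<epsilon> * z)" if z: "z > 0" for z
  proof -
    have "(phit has_field_derivative deriv phit (\<epsilon> * z)) (at (\<epsilon> * z))"
      using d[of "\<epsilon> * z"] z eps by (simp add: DERIV_deriv_iff_real_differentiable)
    from DERIV_chain2[OF this DERIV_cmult_Id]
    have "((\<lambda>r. phit (\<epsilon> * r)) has_field_derivative deriv phit (\<epsilon> * z) * \<epsilon>) (at z)" .
    from DERIV_cdivide[OF this, of \<epsilon>]
    have "(phi_eps phit \<epsilon> has_field_derivative deriv phit (\<epsilon> * z)) (at z)"
      using eps by (simp add: phi_eps_def[abs_def])
    then show ?thesis by (rule DERIV_imp_deriv)
  qed
  have "(deriv phit has_field_derivative deriv (deriv phit) (\<epsilon> * x)) (at (\<epsilon> * x))"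
    using d[of "\<epsilon> * x"] x eps by (simp add: DERIV_deriv_iff_real_differentiable)
  from DERIV_chain2[OF this DERIV_cmult_Id]
  have "((\<lambda>r. deriv phit (\<epsilon> * r)) has_field_derivative deriv (deriv phit) (\<epsilon> * x) * \<epsilon>) (at x)" .
  then have "(deriv (phi_eps phit \<epsilon>) has_field_derivative deriv (deriv phit) (\<epsilon> * x) * \<epsilon>) (at x)"
    by (rule has_field_derivative_transform_within_open[of _ _ _ "{0<..}"]) (use x D1 in auto)
  then show ?thesis by (simp add: DERIV_imp_deriv mult.commute)
qed

lemma D_const:
  fixes D :: "int \<Rightarrow> real"
  assumes "\<And>i. D (i + 1) = D i"
  shows "D (b + int n) = D b"
proof (induction n)
  case 0 then show ?case by simp
next
  case (Suc n)
  have "D (b + int (Suc n)) = D ((b + int n) + 1)" by (simp add: algebra_simps)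
  also have "\<dots> = D (b + int n)" by (rule assms)
  finally show ?case using Suc by simp
qed



theorem proposition2p1:
  fixes s :: nat and M N :: int and phit :: "real \<Rightarrow> real" and rstar \<epsilon> :: real
    and y :: "int \<Rightarrow> real" and l :: "int \<Rightarrow> int"
  assumes s: "s \<ge> 1" and MN: "1 \<le> M" "M < N"
    and C4: "C4_on {0<..} phit"
    and rstar: "rstar > 0"
    and conv: "\<And>r. 0 < r \<Longrightarrow> r \<le> rstar \<Longrightarrow> deriv (deriv phit) r \<ge> 0"
    and conc: "\<And>r. r > rstar \<Longrightarrow> deriv (deriv phit) r < 0"
    and decay: "\<And>k. k \<le> 4 \<Longrightarrow> ((deriv ^^ k) phit \<longlongrightarrow> 0) at_top"
    and incr: "strict_mono y"
    and per: "\<And>i. y (i + 1 + 2 * N) - y (i + 2 * N) = y (i + 1) - y i"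
    and l_lo: "l (-M) = -N" and l_hi: "l M = N"
    and l_mono: "strict_mono_on {-M..M} l"
    and l_per: "\<And>j. l (j + 2 * M) = l j + 2 * N"
    and nu_ge: "\<And>j. l j - l (j - 1) \<ge> int s"
    and interp: "\<And>j i. 0 \<le> i \<Longrightarrow> i \<le> l j - l (j - 1) \<Longrightarrow>
                   y (l (j - 1) + i) = Ynode y l (j - 1)
                     + real_of_int i * ((Ynode y l j - Ynode y l (j - 1)) / real_of_int (l j - l (j - 1)))"
    and eps: "\<epsilon> > 0"
  shows "\<exists>\<eta> :: int \<Rightarrow> nat \<Rightarrow> real.
           (\<forall>j\<in>{-M+1..M}. \<forall>k\<in>{2..s}. 0 \<le> \<eta> j k \<and> \<eta> j k \<le> 1) \<and>
           E_at phit s N y =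
             E_qc phit s M \<epsilon> y l
             + (\<Sum>j=-M+1..M. Hnode \<epsilon> l (j + 1)
                  * (\<Sum>k=2..s. (- (real k ^ 3) + real k) / 12
                       * deriv (deriv (phi_eps phit \<epsilon>))
                           (real k * (\<eta> j k * Y1 \<epsilon> y l j + (1 - \<eta> j k) * Y1 \<epsilon> y l (j + 1))))
                  * (\<epsilon> * Hnode \<epsilon> l (j + 1) * (Y2 \<epsilon> y l (j + 1))\<^sup>2))"
proof -
  have s_pos: "int s \<ge> 1" using s by simp
  have lt: "l (j - 1) < l j" for j using nu_ge[of j] s_pos by linarith
  define nu where "nu j = nat (l j - l (j - 1))" for j
  have nu_int: "int (nu j) = l j - l (j - 1)" for j using lt[of j] by (simp add: nu_def)
  have nu_s: "s \<le> nu j" for j using nu_ge[of j] nu_int[of j] by linarith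
  have lj: "l j = l (j - 1) + int (nu j)" for j using nu_int[of j] by simp
  define r where "r j = (y (l j) - y (l (j - 1))) / real_of_int (l j - l (j - 1))" for j
  have rpos: "r j > 0" for j
  proof -
    have "y (l (j - 1)) < y (l j)" using incr lt[of j] by (simp add: strict_mono_less)
    then show ?thesis unfolding r_def using lt[of j] by simp
  qed
  have interp': "y (l (j - 1) + int i) = y (l (j - 1)) + real i * r j" if "i \<le> nu j" for j i
    using interp[of "int i" j] that nu_int[of j] unfolding Ynode_def r_def by simp
  have ylj: "y (l j) = y (l (j - 1)) + real (nu j) * r j" for j
    using interp'[of "nu j" j] lj[of j] by simp
  have bond: "phit (y (l (j - 1) + int t + int k) - y (l (j - 1) + int t))
      = (if t + k \<le> nu j then phit (real k * r j)
         else phit (real (nu j - t) * r j + (real k - real (nu j - t)) * r (j + 1)))"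
    if k: "1 \<le> k" "k \<le> s" and t: "t < nu j" for j k t
  proof (cases "t + k \<le> nu j")
    case True
    have "y (l (j - 1) + int t + int k) = y (l (j - 1)) + real (t + k) * r j"
      using interp'[of "t + k" j] True by (simp add: add.assoc)
    moreover have "y (l (j - 1) + int t) = y (l (j - 1)) + real t * r j"
      using interp'[of t j] t by simp
    ultimately show ?thesis using True by (simp add: algebra_simps)
  next
    case False
    define m where "m = t + k - nu j"
    have m: "m \<le> nu (j + 1)" using nu_s[of "j+1"] k t False by (simp add: m_def)
    have "l (j - 1) + int t + int k = l ((j + 1) - 1) + int m"
      using lj[of j] False by (simp add: m_def)
    then have "y (l (j - 1) + int t + int k) = y (l j) + real m * r (j + 1)"
      using interp'[OF m] by simp
    moreover have "y (l (j - 1) + int t) = y (l (j - 1)) + real t * r j"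
      using interp'[of t j] t by simp
    moreover have "real k - real (nu j - t) = real m" using False t by (simp add: m_def of_nat_diff)
    moreover have "real (nu j - t) = real (nu j) - real t" using t by (simp add: of_nat_diff)
    ultimately show ?thesis using False ylj[of j] by (simp add: algebra_simps)
  qed
  define Q where "Q j k = phit (real k * r j)" for j k
  define G where "G j k = (\<Sum>i\<in>{1..<k}. phit (real i * r j + (real k - real i) * r (j + 1)))" for j k
  have elem: "(\<Sum>a\<in>{l (j - 1)..<l j}. phit (y (a + int k) - y a)) = real (nu j - k + 1) * Q j k + G j k"
    if k: "1 \<le> k" "k \<le> s" for j k
  proof -
    have "(\<Sum>a\<in>{l (j - 1)..<l (j - 1) + int (nu j)}. phit (y (a + int k) - y a)) = real (nu j - k + 1) * Q j k + G j k"
      unfolding G_def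
    proof (rule elem_sum)
      show "1 \<le> k" "k \<le> nu j" using k nu_s[of j] by auto
      fix t assume t: "t < nu j"
      show "phit (y (l (j - 1) + int t + int k) - y (l (j - 1) + int t)) =
        (if t + k \<le> nu j then Q j k else phit (real (nu j - t) * r j + (real k - real (nu j - t)) * r (j + 1)))"
        using bond[OF k t] unfolding Q_def .
    qed
    then show ?thesis using lj[of j] by simp
  qed
  have Eat: "E_at phit s N y = (\<Sum>k=1..s. \<Sum>j=-M+1..M. real (nu j - k + 1) * Q j k + G j k)"
  proof -
    have *: "(\<Sum>i=-N+1..N. phit (y (i + int k - 1) - y (i - 1))) = (\<Sum>j=-M+1..M. real (nu j - k + 1) * Q j k + G j k)"
      if k: "k \<in> {1..s}" for k
    proof -
      have "(\<Sum>i=-N+1..N. phit (y (i + int k - 1) - y (i - 1))) = (\<Sum>a\<in>{l (-M)..<l (-M + int (nat (2 * M)))}. phit (y (a + int k) - y a))"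
        using MN l_lo l_hi
        by (intro sum.reindex_bij_witness[of _ "\<lambda>a. a + 1" "\<lambda>i. i - 1"]) (auto simp: algebra_simps)
      also have "\<dots> = (\<Sum>j\<in>{-M+1..-M + int (nat (2 * M))}. \<Sum>a\<in>{l(j-1)..<l j}. phit (y (a + int k) - y a))"
        by (rule part_sum) (use lt in \<open>auto intro: less_imp_le\<close>)
      also have "\<dots> = (\<Sum>j=-M+1..M. real (nu j - k + 1) * Q j k + G j k)"
        using MN elem k by (intro sum.cong) auto
      finally show ?thesis .
    qed
    show ?thesis unfolding E_at_def by (rule sum.cong[OF refl *])
  qed
  have dphi: "phit differentiable at x \<and> deriv phit differentiable at x" if "x > 0" for x
  proof -
    have H: "\<forall>k<4. \<forall>x\<in>{0<..}. (deriv ^^ k) phit differentiable at x"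
      using C4 unfolding C4_on_def by blast
    have "(deriv ^^ 0) phit differentiable at x" "(deriv ^^ 1) phit differentiable at x"
      using H[rule_format, of 0 x] H[rule_format, of 1 x] that by auto
    then show ?thesis by simp
  qed
  have cont2: "continuous_on {0<..} (deriv (deriv phit))"
  proof -
    have H: "\<forall>k<4. \<forall>x\<in>{0<..}. (deriv ^^ k) phit differentiable at x"
      using C4 unfolding C4_on_def by blast
    have "(deriv ^^ 2) phit differentiable at x" if "x > 0" for x
      using H[rule_format, of 2 x] that by auto
    then have "isCont (deriv (deriv phit)) x" if "x > 0" for x
      using that by (simp add: numeral_2_eq_2 differentiable_imp_continuous_within)
    then show ?thesis by (intro continuous_at_imp_continuous_on) auto
  qed
  define P where "P j k e \<longleftrightarrow> 0 \<le> e \<and> e \<le> 1 \<and>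
    G j k = (real k - 1) / 2 * (Q j k + Q (j + 1) k)
      + (- (real k ^ 3) + real k) / 12 * deriv (deriv phit) (real k * (e * r j + (1 - e) * r (j + 1))) * (r j - r (j + 1))^2"
    for j k e
  have exP: "\<exists>e. P j k e" if "1 \<le> k" for j k
    using node[of phit "r j" "r (j+1)" k, OF dphi cont2 rpos rpos that] unfolding P_def G_def Q_def
    by (simp add: mult.commute)
  define \<eta> where "\<eta> j k = (SOME e. P j k e)" for j k
  have Peta: "P j k (\<eta> j k)" if "1 \<le> k" for j k
    unfolding \<eta>_def using exP[OF that] by (rule someI_ex)
  define R where "R j k = (- (real k ^ 3) + real k) / 12 * deriv (deriv phit) (real k * (\<eta> j k * r j + (1 - \<eta> j k) * r (j + 1))) * (r j - r (j + 1))^2" for j k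
  have Geq: "G j k = (real k - 1) / 2 * (Q j k + Q (j + 1) k) + R j k" if "1 \<le> k" for j k
    using Peta[OF that] unfolding P_def R_def by simp
  have eta01: "0 \<le> \<eta> j k \<and> \<eta> j k \<le> 1" if "1 \<le> k" for j k
    using Peta[OF that] unfolding P_def by simp
  have rper: "r (M + 1) = r (-M + 1)"
  proof -
    define D where "D i = y (i + 2 * N) - y i" for i
    have Dst: "D (i + 1) = D i" for i using per[of i] unfolding D_def by (simp add: algebra_simps)
    have lM1: "l (M + 1) = l (-M + 1) + 2 * N" using l_per[of "-M + 1"] by (simp add: algebra_simps)
    have "D (l (-M) + int (nat (l (-M + 1) - l (-M)))) = D (l (-M))" by (rule D_const[of D, OF Dst])
    moreover have "l (-M) + int (nat (l (-M + 1) - l (-M))) = l (-M + 1)" using lt[of "-M + 1"] by simp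
    ultimately have DD: "D (l (-M + 1)) = D (l (-M))" by simp
    have "y (l (M + 1)) - y (l (M + 1 - 1)) = y (l (-M + 1)) - y (l (-M + 1 - 1))"
      using DD unfolding D_def lM1 by (simp add: l_lo l_hi algebra_simps)
    moreover have "l (M + 1) - l (M + 1 - 1) = l (-M + 1) - l (-M + 1 - 1)"
      using lM1 l_lo l_hi by simp
    ultimately show ?thesis unfolding r_def by simp
  qed
  have shift: "(\<Sum>j=-M+1..M. Q (j + 1) k) = (\<Sum>j=-M+1..M. Q j k)" for k
  proof -
    have "(\<Sum>j=-M+1..M. Q (j + 1) k) = (\<Sum>j=-M+2..M+1. Q j k)"
      by (rule sum.reindex_bij_witness[of _ "\<lambda>j. j - 1" "\<lambda>j. j + 1"]) auto
    also have "{-M+2..M+1} = insert (M+1) {-M+2..M}" using MN by auto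
    also have "(\<Sum>j\<in>insert (M+1) {-M+2..M}. Q j k) = Q (M+1) k + (\<Sum>j=-M+2..M. Q j k)"
      by (subst sum.insert) auto
    also have "Q (M+1) k = Q (-M+1) k" unfolding Q_def rper ..
    also have "Q (-M+1) k + (\<Sum>j=-M+2..M. Q j k) = (\<Sum>j\<in>insert (-M+1) {-M+2..M}. Q j k)"
      by (subst sum.insert) auto
    also have "insert (-M+1) {-M+2..M} = {-M+1..M}" using MN by auto
    finally show ?thesis .
  qed
  have Eat2: "E_at phit s N y = (\<Sum>j=-M+1..M. real (nu j) * (\<Sum>k=1..s. Q j k)) + (\<Sum>j=-M+1..M. \<Sum>k=2..s. R j k)"
  proof -
    have "(\<Sum>j=-M+1..M. real (nu j - k + 1) * Q j k + G j k)
        = (\<Sum>j=-M+1..M. real (nu j) * Q j k + R j k)" if k: "k \<in> {1..s}" for k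
    proof -
      have "(\<Sum>j=-M+1..M. real (nu j - k + 1) * Q j k + G j k)
          = (\<Sum>j=-M+1..M. (real (nu j) - (real k - 1) / 2) * Q j k + R j k) + (real k - 1) / 2 * (\<Sum>j=-M+1..M. Q (j + 1) k)"
      proof -
        have "real (nu j - k + 1) * Q j k + G j k = ((real (nu j) - (real k - 1) / 2) * Q j k + R j k) + (real k - 1) / 2 * Q (j + 1) k" for j
        proof -
          have "real (nu j - k + 1) = real (nu j) - real k + 1" using nu_s[of j] k by (simp add: of_nat_diff)
          then show ?thesis using Geq[of k j] k by (simp add: algebra_simps)
        qed
        then show ?thesis by (simp add: sum.distrib sum_distrib_left)
      qed
      also have "\<dots> = (\<Sum>j=-M+1..M. (real (nu j) - (real k - 1) / 2) * Q j k + R j k) + (real k - 1) / 2 * (\<Sum>j=-M+1..M. Q j k)"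
        unfolding shift ..
      also have "\<dots> = (\<Sum>j=-M+1..M. real (nu j) * Q j k + R j k)"
        by (simp add: sum.distrib sum_distrib_left algebra_simps sum_subtractf)
      finally show ?thesis .
    qed
    then have "E_at phit s N y = (\<Sum>k=1..s. \<Sum>j=-M+1..M. real (nu j) * Q j k + R j k)"
      unfolding Eat by (rule sum.cong[OF refl])
    also have "\<dots> = (\<Sum>j=-M+1..M. real (nu j) * (\<Sum>k=1..s. Q j k)) + (\<Sum>j=-M+1..M. \<Sum>k=1..s. R j k)"
      by (simp only: sum.distrib sum_distrib_left) (rule arg_cong2[where f="(+)"]; rule sum.swap)
    also have "(\<Sum>j=-M+1..M. \<Sum>k=1..s. R j k) = (\<Sum>j=-M+1..M. \<Sum>k=2..s. R j k)"
    proof (rule sum.cong[OF refl])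
      fix j
      have "{1..s} = insert 1 {2..s}" using s by auto
      then show "(\<Sum>k=1..s. R j k) = (\<Sum>k=2..s. R j k)" by (simp add: R_def)
    qed
    finally show ?thesis .
  qed
  have Y1r: "Y1 \<epsilon> y l j = r j / \<epsilon>" for j
    unfolding Y1_def Ynode_def Xnode_def r_def using eps by (simp add: right_diff_distrib[symmetric])
  have Eqc: "E_qc phit s M \<epsilon> y l = (\<Sum>j=-M+1..M. real (nu j) * (\<Sum>k=1..s. Q j k))"
    unfolding E_qc_def
  proof (rule sum.cong[OF refl])
    fix j
    have "phi_cb (phi_eps phit \<epsilon>) s (Y1 \<epsilon> y l j) = (\<Sum>k=1..s. Q j k) / \<epsilon>"
      unfolding phi_cb_def phi_eps_def Y1r Q_def using eps by (simp add: sum_divide_distrib)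
    moreover have "nunode \<epsilon> l j = \<epsilon> * real (nu j)" unfolding nunode_def using nu_int[of j] by (metis of_int_of_nat_eq)
    ultimately show "nunode \<epsilon> l j * phi_cb (phi_eps phit \<epsilon>) s (Y1 \<epsilon> y l j) = real (nu j) * (\<Sum>k=1..s. Q j k)"
      using eps by simp
  qed
  have corr: "Hnode \<epsilon> l (j + 1)
                  * (\<Sum>k=2..s. (- (real k ^ 3) + real k) / 12
                       * deriv (deriv (phi_eps phit \<epsilon>))
                           (real k * (\<eta> j k * Y1 \<epsilon> y l j + (1 - \<eta> j k) * Y1 \<epsilon> y l (j + 1))))
                  * (\<epsilon> * Hnode \<epsilon> l (j + 1) * (Y2 \<epsilon> y l (j + 1))\<^sup>2) = (\<Sum>k=2..s. R j k)" for j
  proof -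
    have Hpos: "Hnode \<epsilon> l (j + 1) > 0"
    proof -
      have "l (j - 1) < l (j + 1)" using lt[of j] lt[of "j + 1"] by simp
      then show ?thesis unfolding Hnode_def Xnode_def using eps
        by (simp add: right_diff_distrib[symmetric])
    qed
    have D2: "deriv (deriv (phi_eps phit \<epsilon>)) (real k * (\<eta> j k * Y1 \<epsilon> y l j + (1 - \<eta> j k) * Y1 \<epsilon> y l (j + 1)))
        = \<epsilon> * deriv (deriv phit) (real k * (\<eta> j k * r j + (1 - \<eta> j k) * r (j + 1)))" if k: "k \<in> {2..s}" for k
    proof -
      have e: "0 \<le> \<eta> j k" "\<eta> j k \<le> 1" using eta01[of k j] k by auto
      have pos: "\<eta> j k * r j + (1 - \<eta> j k) * r (j + 1) > 0"
      proof (cases "\<eta> j k = 0")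
        case True then show ?thesis using rpos[of "j+1"] by simp
      next
        case False
        then have "\<eta> j k * r j > 0" using e rpos[of j] by simp
        moreover have "(1 - \<eta> j k) * r (j + 1) \<ge> 0" using e rpos[of "j+1"] by simp
        ultimately show ?thesis by linarith
      qed
      have arg: "real k * (\<eta> j k * Y1 \<epsilon> y l j + (1 - \<eta> j k) * Y1 \<epsilon> y l (j + 1))
          = real k * (\<eta> j k * r j + (1 - \<eta> j k) * r (j + 1)) / \<epsilon>"
        unfolding Y1r using eps by (simp add: field_simps)
      have "real k * (\<eta> j k * r j + (1 - \<eta> j k) * r (j + 1)) / \<epsilon> > 0" using pos k eps by simp
      from deriv2_phi_eps[OF dphi eps this] show ?thesis unfolding arg using eps by simp
    qed
    have Y2r: "\<epsilon> * Hnode \<epsilon> l (j + 1) * (Y2 \<epsilon> y l (j + 1))\<^sup>2 * Hnode \<epsilon> l (j + 1) = (r j - r (j + 1))^2 / \<epsilon>"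
      unfolding Y2_def Y1r using Hpos eps by (simp add: field_simps power2_eq_square)
    have "Hnode \<epsilon> l (j + 1)
                  * (\<Sum>k=2..s. (- (real k ^ 3) + real k) / 12
                       * deriv (deriv (phi_eps phit \<epsilon>))
                           (real k * (\<eta> j k * Y1 \<epsilon> y l j + (1 - \<eta> j k) * Y1 \<epsilon> y l (j + 1))))
                  * (\<epsilon> * Hnode \<epsilon> l (j + 1) * (Y2 \<epsilon> y l (j + 1))\<^sup>2)
        = (\<Sum>k=2..s. (- (real k ^ 3) + real k) / 12 * (\<epsilon> * deriv (deriv phit) (real k * (\<eta> j k * r j + (1 - \<eta> j k) * r (j + 1)))))
          * ((r j - r (j + 1))^2 / \<epsilon>)"
      unfolding Y2r[symmetric] using D2 by (simp add: sum.cong)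
    also have "\<dots> = (\<Sum>k=2..s. R j k)"
      unfolding R_def sum_distrib_right using eps by (intro sum.cong refl) (simp add: field_simps)
    finally show ?thesis .
  qed
  show ?thesis
  proof (intro exI[of _ \<eta>] conjI ballI)
    fix j k assume "k \<in> {2..s}"
    then show "0 \<le> \<eta> j k" "\<eta> j k \<le> 1" using eta01[of k j] by auto
  next
    show "E_at phit s N y = E_qc phit s M \<epsilon> y l + (\<Sum>j=-M+1..M. Hnode \<epsilon> l (j + 1)
                  * (\<Sum>k=2..s. (- (real k ^ 3) + real k) / 12
                       * deriv (deriv (phi_eps phit \<epsilon>))
                           (real k * (\<eta> j k * Y1 \<epsilon> y l j + (1 - \<eta> j k) * Y1 \<epsilon> y l (j + 1))))
                  * (\<epsilon> * Hnode \<epsilon> l (j + 1) * (Y2 \<epsilon> y l (j + 1))\<^sup>2))"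
      unfolding corr Eat2 Eqc ..
  qed
qed

end
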